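(* Let $d\ge2$, $\omega:=\frac1{\sqrt d}\sum_{i=1}^de_i\otimes e_i$, $P_\omega:=\omega\omega^\ast$, and for $\alpha\in[1,d]$ let $f_d(\alpha):=\mu_\alpha(P_\omega)$ and $t^\ast_\alpha:=\frac{k+\theta^2}{(k+\theta)^2}$, where $k=\lfloor\alpha\rfloor$, $\theta=\alpha-k$. Then $f_d(\alpha)=\frac{1}{d\,t^\ast_\alpha}$ for every $\alpha\in[1,d]$. In particular, along the maps $\Phi_t(X)=\mathrm{Tr}(X)I_d-tX$, $t\in(0,1]$, one has $\Phi_t\in\mathsf P_\alpha$ if and only if $t\le 1/(d f_d(\alpha))$.
   Context: Schmidt coefficients $s_1(\psi)\ge\dots\ge s_d(\psi)\ge0$ of $\psi=\sum a_{ij}e_i\otimes e_j\in\mathbb C^d\otimes\mathbb C^d$ are the singular values of $[a_{ij}]$. For $\alpha\in[1,d]$ with $k=\lfloor\alpha\rfloor$, $\theta=\alpha-k$, $r=\lceil\alpha\rceil$, a unit vector $\psi$ is $\alpha$-admissible if $s_j(\psi)=0$ for $j\ge r+1$ and, when $\theta>0$, $s_{k+1}(\psi)\le\frac\theta k\sum_{j=1}^ks_j(\psi)$; $\mathcal V_\alpha$ is the set of these. For Hermitian $W$, $\mu_\alpha(W):=\max\{\langle\psi,W\psi\rangle:\psi\in\mathcal V_\alpha\}$. The Choi matrix is $C_\Phi=\sum_{i,j}E_{ij}\otimes\Phi(E_{ij})$, and a Hermitian-preserving $\Phi$ is in $\mathsf P_\alpha$ if $\langle\psi,C_\Phi\psi\rangle\ge0$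 for all $\psi\in\mathcal V_\alpha$. *)

theory Defs
  imports "Jordan_Normal_Form.Schur_Decomposition"
begin

text \<open>Vectors of C^d (x) C^d are complex vectors of dimension d*d; the basis vector
  e_i (x) e_j has index i*d+j. Operators on C^d (x) C^d are (d*d) x (d*d) matrices.\<close>

definition coeff_mat :: "nat \<Rightarrow> complex vec \<Rightarrow> complex mat" where
  "coeff_mat d \<psi> = mat d d (\<lambda>(i,j). \<psi> $ (i*d+j))"

text \<open>Schmidt coefficients: the singular values of the coefficient matrix, listed in
  non-increasing order, with multiplicity, i.e. the list (s_1,...,s_d) of non-negative reals
  whose squares are the roots (with multiplicity) of the characteristic polynomial of A^* A.\<close>

definition schmidt_list :: "nat \<Rightarrow> complex vec \<Rightarrow> real list" where
  "schmidt_list d \<psi> = (THE ls. length ls = d \<and> sorted_wrt (\<ge>) ls \<and> (\<forall>s\<in>set ls. s \<ge> 0) \<and>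
      char_poly (mat_adjoint (coeff_mat d \<psi>) * coeff_mat d \<psi>)
        = (\<Prod>s\<leftarrow>ls. [:- complex_of_real (s^2), 1:]))"

text \<open>s_j(psi), 1-based index, j in {1..d}.\<close>
definition schmidt :: "nat \<Rightarrow> complex vec \<Rightarrow> nat \<Rightarrow> real" where
  "schmidt d \<psi> j = schmidt_list d \<psi> ! (j - 1)"

definition unit_vector :: "nat \<Rightarrow> complex vec \<Rightarrow> bool" where
  "unit_vector d \<psi> \<longleftrightarrow> \<psi> \<in> carrier_vec (d*d) \<and> (\<Sum>a<d*d. (cmod (\<psi> $ a))^2) = 1"

definition admissible :: "nat \<Rightarrow> real \<Rightarrow> complex vec \<Rightarrow> bool" where
  "admissible d \<alpha> \<psi> \<longleftrightarrow>
     (let k = nat \<lfloor>\<alpha>\<rfloor>; \<theta> = \<alpha> - real k; r = nat \<lceil>\<alpha>\<rceil> in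
       unit_vector d \<psi> \<and>
       (\<forall>j. r + 1 \<le> j \<and> j \<le> d \<longrightarrow> schmidt d \<psi> j = 0) \<and>
       (\<theta> > 0 \<longrightarrow> schmidt d \<psi> (k+1) \<le> \<theta> / real k * (\<Sum>j=1..k. schmidt d \<psi> j)))"

definition V :: "nat \<Rightarrow> real \<Rightarrow> complex vec set" where
  "V d \<alpha> = {\<psi>. admissible d \<alpha> \<psi>}"

definition qform :: "nat \<Rightarrow> complex mat \<Rightarrow> complex vec \<Rightarrow> complex" where
  "qform d W \<psi> = (\<Sum>a<d*d. \<Sum>b<d*d. cnj (\<psi> $ a) * W $$ (a,b) * \<psi> $ b)"

text \<open>mu_alpha(W) = max over V_alpha of <psi, W psi> (real, as W is Hermitian); the
  maximum is written as a supremum (it is attained, V_alpha being compact and nonempty).\<close>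
definition mu :: "nat \<Rightarrow> real \<Rightarrow> complex mat \<Rightarrow> real" where
  "mu d \<alpha> W = Sup ((\<lambda>\<psi>. Re (qform d W \<psi>)) ` V d \<alpha>)"

definition omega :: "nat \<Rightarrow> complex vec" where
  "omega d = vec (d*d) (\<lambda>a. if a div d = a mod d then complex_of_real (1 / sqrt (real d)) else 0)"

definition P_omega :: "nat \<Rightarrow> complex mat" where
  "P_omega d = mat (d*d) (d*d) (\<lambda>(a,b). omega d $ a * cnj (omega d $ b))"

definition f_d :: "nat \<Rightarrow> real \<Rightarrow> real" where
  "f_d d \<alpha> = mu d \<alpha> (P_omega d)"

definition t_star :: "real \<Rightarrow> real" where
  "t_star \<alpha> = (let k = real_of_int \<lfloor>\<alpha>\<rfloor>; \<theta> = \<alpha> - k in (k + \<theta>^2) / (k + \<theta>)^2)"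

definition matunit :: "nat \<Rightarrow> nat \<Rightarrow> nat \<Rightarrow> complex mat" where
  "matunit d i j = mat d d (\<lambda>(a,b). if a = i \<and> b = j then 1 else 0)"

definition choi :: "nat \<Rightarrow> (complex mat \<Rightarrow> complex mat) \<Rightarrow> complex mat" where
  "choi d \<Phi> = mat (d*d) (d*d) (\<lambda>(p,q). \<Phi> (matunit d (p div d) (q div d)) $$ (p mod d, q mod d))"

definition hermitian_mat :: "complex mat \<Rightarrow> bool" where
  "hermitian_mat X \<longleftrightarrow> mat_adjoint X = X"

definition hermitian_preserving :: "nat \<Rightarrow> (complex mat \<Rightarrow> complex mat) \<Rightarrow> bool" where
  "hermitian_preserving d \<Phi> \<longleftrightarrow> (\<forall>X \<in> carrier_mat d d. hermitian_mat X \<longrightarrow>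
       \<Phi> X \<in> carrier_mat d d \<and> hermitian_mat (\<Phi> X))"

definition P_class :: "nat \<Rightarrow> real \<Rightarrow> (complex mat \<Rightarrow> complex mat) set" where
  "P_class d \<alpha> = {\<Phi>. hermitian_preserving d \<Phi> \<and> (\<forall>\<psi>\<in>V d \<alpha>. Re (qform d (choi d \<Phi>) \<psi>) \<ge> 0)}"

definition mtrace :: "nat \<Rightarrow> complex mat \<Rightarrow> complex" where
  "mtrace d X = (\<Sum>i<d. X $$ (i,i))"

definition Phi_t :: "nat \<Rightarrow> real \<Rightarrow> complex mat \<Rightarrow> complex mat" where
  "Phi_t d t X = mtrace d X \<cdot>\<^sub>m 1\<^sub>m d - complex_of_real t \<cdot>\<^sub>m X"

end

theory Submission
  imports Defs "HOL-Analysis.L2_Norm"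
begin


lemma adj_dims[simp]: "dim_row (mat_adjoint A) = dim_col A" "dim_col (mat_adjoint A) = dim_row A"
  unfolding mat_adjoint_def by auto

lemma adj_carrier[simp]: "A \<in> carrier_mat n m \<Longrightarrow> mat_adjoint A \<in> carrier_mat m n"
  unfolding carrier_mat_def by auto

lemma adj_index[simp]: "i < dim_col A \<Longrightarrow> j < dim_row A \<Longrightarrow>
   mat_adjoint (A :: complex mat) $$ (i,j) = cnj (A $$ (j,i))"
  unfolding mat_adjoint_def mat_of_rows_def by auto

lemma adj_adj[simp]: "mat_adjoint (mat_adjoint (A :: complex mat)) = A"
  by (rule eq_matI, auto)

lemma adj_one[simp]: "mat_adjoint (1\<^sub>m n :: complex mat) = 1\<^sub>m n"
  by (rule eq_matI, auto)

lemma adj_zero[simp]: "mat_adjoint (0\<^sub>m n m :: complex mat) = 0\<^sub>m m n"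
  by (rule eq_matI, auto)

lemma adj_mult: assumes "(A :: complex mat) \<in> carrier_mat n m" "B \<in> carrier_mat m p"
  shows "mat_adjoint (A * B) = mat_adjoint B * mat_adjoint A"
proof (rule eq_matI)
  fix i j assume ij: "i < dim_row (mat_adjoint B * mat_adjoint A)" "j < dim_col (mat_adjoint B * mat_adjoint A)"
  hence i: "i < p" and j: "j < n" using assms by auto
  have "mat_adjoint (A * B) $$ (i,j) = cnj (\<Sum>k<m. A $$ (j,k) * B $$ (k,i))"
    using assms i j by (simp add: scalar_prod_def atLeast0LessThan)
  also have "\<dots> = (\<Sum>k<m. cnj (B $$ (k,i)) * cnj (A $$ (j,k)))"
    by (simp add: mult.commute)
  also have "\<dots> = (mat_adjoint B * mat_adjoint A) $$ (i,j)"
    using assms i j by (simp add: scalar_prod_def atLeast0LessThan)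
  finally show "mat_adjoint (A * B) $$ (i,j) = (mat_adjoint B * mat_adjoint A) $$ (i,j)" .
qed (use assms in auto)


lemma unit_extend: assumes v: "(v :: complex vec) \<in> carrier_vec n" and v0: "v \<noteq> 0\<^sub>v n"
  shows "\<exists>W \<in> carrier_mat n n. mat_adjoint W * W = 1\<^sub>m n \<and> (\<exists>c. c \<noteq> 0 \<and> col W 0 = c \<cdot>\<^sub>v v)"
proof -
  interpret cof_vec_space n "TYPE(complex)" .
  define b where "b = basis_completion v"
  define ws where "ws = gram_schmidt n b"
  from basis_completion[OF v v0, folded b_def]
  have dist_b: "distinct b" 
    and indep: "\<not> lin_dep (set b)" and b: "set b \<subseteq> carrier_vec n" and hdb: "hd b = v" 
    and len_b: "length b = n" by auto
  have n: "n \<noteq> 0" using v v0 by (cases n, auto)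
  from hdb len_b n obtain vs where bv: "b = v # vs" by (cases b, auto)
  from gram_schmidt_result[OF b dist_b indep refl, folded ws_def]
  have ws: "set ws \<subseteq> carrier_vec n" "corthogonal ws" "length ws = n" 
    by (auto simp: len_b)
  from gram_schmidt_hd[OF v, of vs, folded bv] have hdws: "hd ws = v" unfolding ws_def .
  have ws0: "ws ! 0 = v" using hdws ws n by (cases ws, auto)
  define nr where "nr j = sqrt (\<Sum>k<n. (cmod (ws ! j $ k))^2)" for j
  have wscarr: "j < n \<Longrightarrow> ws ! j \<in> carrier_vec n" for j using ws by auto
  have sq: "ws ! i \<bullet>c ws ! j = (\<Sum>k<n. ws ! i $ k * cnj (ws ! j $ k))" if "i < n" "j < n" for i j
    using wscarr[OF that(1)] wscarr[OF that(2)] by (simp add: scalar_prod_def atLeast0LessThan)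
  have self: "ws ! j \<bullet>c ws ! j = complex_of_real ((nr j)^2)" if "j < n" for j
  proof -
    have "ws ! j \<bullet>c ws ! j = (\<Sum>k<n. complex_of_real ((cmod (ws ! j $ k))^2))"
      unfolding sq[OF that that] by (rule sum.cong, auto simp: complex_norm_square[symmetric])
    also have "\<dots> = complex_of_real ((nr j)^2)"
    proof -
      have "(nr j)^2 = (\<Sum>k<n. (cmod (ws ! j $ k))^2)" unfolding nr_def by (simp add: sum_nonneg)
      thus ?thesis by simp
    qed
    finally show ?thesis .
  qed
  have nr0: "nr j \<noteq> 0" if "j < n" for j
  proof
    assume "nr j = 0"
    hence "ws ! j \<bullet>c ws ! j = 0" using self[OF that] by simp
    thus False using corthogonalD[OF ws(2), of j j] that ws(3) by auto
  qed
  define W where "W = mat n n (\<lambda>(i,j). ws ! j $ i / complex_of_real (nr j))"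
  have W: "W \<in> carrier_mat n n" unfolding W_def by auto
  have "mat_adjoint W * W = 1\<^sub>m n"
  proof (rule eq_matI)
    fix i j assume "i < dim_row (1\<^sub>m n :: complex mat)" "j < dim_col (1\<^sub>m n :: complex mat)"
    hence i: "i < n" and j: "j < n" by auto
    have "(mat_adjoint W * W) $$ (i,j) = (\<Sum>k<n. cnj (ws ! i $ k / complex_of_real (nr i)) * (ws ! j $ k / complex_of_real (nr j)))"
      using i j W by (simp add: scalar_prod_def atLeast0LessThan W_def)
    also have "\<dots> = (\<Sum>k<n. ws ! j $ k * cnj (ws ! i $ k)) / (complex_of_real (nr i) * complex_of_real (nr j))"
      by (simp add: sum_divide_distrib mult.commute)
    also have "\<dots> = (ws ! j \<bullet>c ws ! i) / (complex_of_real (nr i) * complex_of_real (nr j))"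
      using sq[OF j i] by simp
    also have "\<dots> = 1\<^sub>m n $$ (i,j)"
    proof (cases "i = j")
      case True
      thus ?thesis using self[OF i] nr0[OF i] i by (simp add: power2_eq_square)
    next
      case False
      thus ?thesis using corthogonalD[OF ws(2), of j i] i j ws(3) by auto
    qed
    finally show "(mat_adjoint W * W) $$ (i,j) = 1\<^sub>m n $$ (i,j)" .
  qed (use W in auto)
  moreover have "col W 0 = (1 / complex_of_real (nr 0)) \<cdot>\<^sub>v v"
    by (rule eq_vecI, insert n v ws0, auto simp: W_def)
  moreover have "1 / complex_of_real (nr 0) \<noteq> 0" using nr0[of 0] n by auto
  ultimately show ?thesis using W by blast
qed

lemma assoc4: assumes "A \<in> carrier_mat n n" "B \<in> carrier_mat n n" "C \<in> carrier_mat n n" "D \<in> carrier_mat n n"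
  shows "(A * B) * (C * D) = A * (B * C) * D"
proof -
  have "(A * B) * (C * D) = A * (B * (C * D))" using assms by (meson assoc_mult_mat mult_carrier_mat)
  also have "B * (C * D) = (B * C) * D" using assms by (meson assoc_mult_mat[symmetric])
  also have "A * ((B * C) * D) = A * (B * C) * D" using assms by (meson assoc_mult_mat[symmetric] mult_carrier_mat)
  finally show ?thesis .
qed

lemma assoc5: assumes "A \<in> carrier_mat n n" "B \<in> carrier_mat n n" "C \<in> carrier_mat n n" "D \<in> carrier_mat n n"
  "H \<in> carrier_mat n n"
  shows "(A * B) * H * (C * D) = A * (B * H * C) * D"
proof -
  have "(A * B) * H = A * (B * H)" using assms by (meson assoc_mult_mat)
  hence "(A * B) * H * (C * D) = (A * (B * H)) * (C * D)" by simp
  also have "\<dots> = A * (B * H * C) * D" by (rule assoc4, insert assms, auto)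
  finally show ?thesis .
qed

lemma spectral:
  assumes "(H :: complex mat) \<in> carrier_mat n n" "mat_adjoint H = H"
  shows "\<exists>U D. U \<in> carrier_mat n n \<and> mat_adjoint U * U = 1\<^sub>m n \<and> D \<in> carrier_mat n n \<and>
      diagonal_mat D \<and> mat_adjoint U * H * U = D"
  using assms
proof (induction n arbitrary: H)
  case 0
  then show ?case by (intro exI[of _ "1\<^sub>m 0"] exI[of _ H]) (auto simp: diagonal_mat_def)
next
  case (Suc m)
  note H = Suc.prems(1) and herm = Suc.prems(2)
  obtain as where cp: "char_poly H = (\<Prod>a\<leftarrow>as. [:-a,1:])" and len: "length as = Suc m"
    using char_poly_factorized[OF H] by blast
  then obtain e as' where as: "as = e # as'" by (cases as) auto
  have "eigenvalue H e" unfolding eigenvalue_root_char_poly[OF H] cp as by simp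
  from find_eigenvector[OF H this] have ev: "eigenvector H (find_eigenvector H e) e" .
  define v where "v = find_eigenvector H e"
  have v: "v \<in> carrier_vec (Suc m)" "v \<noteq> 0\<^sub>v (Suc m)" "H *\<^sub>v v = e \<cdot>\<^sub>v v"
    using H ev unfolding eigenvector_def v_def by auto
  from unit_extend[OF v(1,2)] obtain W c where W: "W \<in> carrier_mat (Suc m) (Suc m)"
    and WW: "mat_adjoint W * W = 1\<^sub>m (Suc m)" and c: "col W 0 = c \<cdot>\<^sub>v v" by blast
  have aW: "mat_adjoint W \<in> carrier_mat (Suc m) (Suc m)" using W by simp
  define H' where "H' = mat_adjoint W * H * W"
  have H'c: "H' \<in> carrier_mat (Suc m) (Suc m)" using mult_carrier_mat[OF mult_carrier_mat[OF aW H] W] by (simp add: H'_def)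
  have H'2: "H' = mat_adjoint W * (H * W)" unfolding H'_def by (rule assoc_mult_mat[OF aW H W])
  have "mat_adjoint H' = mat_adjoint W * mat_adjoint (mat_adjoint W * H)"
    unfolding H'_def by (simp add: adj_mult[OF mult_carrier_mat[OF aW H] W])
  also have "\<dots> = mat_adjoint W * (H * W)" using adj_mult[OF aW H] herm by simp
  finally have H'h: "mat_adjoint H' = H'" using H'2 by simp
  have colHW: "col (H * W) 0 = e \<cdot>\<^sub>v col W 0"
  proof -
    have "col (H * W) 0 = H *\<^sub>v col W 0" by (rule col_mult2[OF H W], simp)
    also have "\<dots> = e \<cdot>\<^sub>v col W 0" unfolding c using v H by (simp add: mult_mat_vec smult_smult_assoc mult.commute)
    finally show ?thesis .
  qed
  have col0: "H' $$ (i,0) = (if i = 0 then e else 0)" if i: "i < Suc m" for i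
  proof -
    have "H' $$ (i,0) = row (mat_adjoint W) i \<bullet> col (H * W) 0" unfolding H'2 using i W H by simp
    also have "\<dots> = e * (row (mat_adjoint W) i \<bullet> col W 0)" unfolding colHW
      by (rule scalar_prod_smult_right, insert i W, auto)
    also have "row (mat_adjoint W) i \<bullet> col W 0 = (mat_adjoint W * W) $$ (i,0)" using i W by simp
    finally show ?thesis unfolding WW using i by simp
  qed
  have row0: "H' $$ (0,j) = (if j = 0 then e else 0)" if j: "j < Suc m" for j
  proof -
    have "H' $$ (0,j) = mat_adjoint H' $$ (0,j)" using H'h by simp
    also have "\<dots> = cnj (H' $$ (j,0))" using H'c j by simp
    finally show ?thesis using col0[OF j] col0[of 0] by (cases "j = 0") auto
  qed
  define H3 where "H3 = mat m m (\<lambda>(i,j). H' $$ (Suc i, Suc j))"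
  have H3c: "H3 \<in> carrier_mat m m" unfolding H3_def by simp
  have H'blk: "H' = four_block_mat (mat 1 1 (\<lambda>_. e)) (0\<^sub>m 1 m) (0\<^sub>m m 1) H3"
  proof (rule eq_matI)
    fix i j assume ij: "i < dim_row (four_block_mat (mat 1 1 (\<lambda>_. e)) (0\<^sub>m 1 m) (0\<^sub>m m 1) H3)"
      "j < dim_col (four_block_mat (mat 1 1 (\<lambda>_. e)) (0\<^sub>m 1 m) (0\<^sub>m m 1) H3)"
    hence i: "i < Suc m" and j: "j < Suc m" using H3c by auto
    show "H' $$ (i, j) = four_block_mat (mat 1 1 (\<lambda>_. e)) (0\<^sub>m 1 m) (0\<^sub>m m 1) H3 $$ (i, j)"
      using i j H3c col0[OF i] row0[OF j]
      by (cases "i = 0"; cases "j = 0"; auto simp: H3_def)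
  qed (use H'c H3c in auto)
  have H3h: "mat_adjoint H3 = H3"
  proof (rule eq_matI)
    fix i j assume "i < dim_row H3" "j < dim_col H3"
    hence i: "i < m" and j: "j < m" using H3c by auto
    have "mat_adjoint H3 $$ (i,j) = cnj (H' $$ (Suc j, Suc i))" using i j by (simp add: H3_def)
    also have "\<dots> = mat_adjoint H' $$ (Suc i, Suc j)" using i j H'c by simp
    also have "\<dots> = H3 $$ (i,j)" using H'h i j by (simp add: H3_def)
    finally show "mat_adjoint H3 $$ (i,j) = H3 $$ (i,j)" .
  qed (use H3c in auto)
  from Suc.IH[OF H3c H3h] obtain U3 D3 where U3: "U3 \<in> carrier_mat m m"
    and UU3: "mat_adjoint U3 * U3 = 1\<^sub>m m" and D3: "D3 \<in> carrier_mat m m" and dD3: "diagonal_mat D3"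
    and HD3: "mat_adjoint U3 * H3 * U3 = D3" by blast
  define B where "B = four_block_mat (1\<^sub>m 1) (0\<^sub>m 1 m) (0\<^sub>m m 1) U3"
  have "B \<in> carrier_mat (1 + m) (1 + m)" unfolding B_def by (rule four_block_carrier_mat[OF one_carrier_mat U3])
  hence Bc: "B \<in> carrier_mat (Suc m) (Suc m)" by simp
  have aB: "mat_adjoint B = four_block_mat (1\<^sub>m 1) (0\<^sub>m 1 m) (0\<^sub>m m 1) (mat_adjoint U3)"
    by (rule eq_matI, insert U3, auto simp: B_def)
  define U where "U = W * B"
  have Uc: "U \<in> carrier_mat (Suc m) (Suc m)" unfolding U_def using W Bc by simp
  have aU: "mat_adjoint U = mat_adjoint B * mat_adjoint W" unfolding U_def by (rule adj_mult[OF W Bc])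
  have aBc: "mat_adjoint B \<in> carrier_mat (Suc m) (Suc m)" using Bc by simp
  have "mat_adjoint U * U = mat_adjoint B * (mat_adjoint W * W) * B"
    unfolding aU unfolding U_def by (rule assoc4[OF aBc aW W Bc])
  also have "\<dots> = mat_adjoint B * B" using aBc Bc unfolding WW by simp
  also have "\<dots> = 1\<^sub>m (Suc m)" unfolding aB unfolding B_def
    by (subst mult_four_block_mat[of _ 1 1 _ m _ m], insert U3 UU3, auto)
  finally have UU: "mat_adjoint U * U = 1\<^sub>m (Suc m)" .
  have "mat_adjoint U * H * U = mat_adjoint B * H' * B"
    unfolding aU unfolding U_def H'_def by (rule assoc5[OF aBc aW W Bc H])
  also have "\<dots> = four_block_mat (mat 1 1 (\<lambda>_. e)) (0\<^sub>m 1 m) (0\<^sub>m m 1) D3"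
    unfolding aB unfolding B_def H'blk HD3[symmetric]
    by (subst mult_four_block_mat[of _ 1 1 _ m _ m], insert U3 H3c, auto,
        subst mult_four_block_mat[of _ 1 1 _ m _ m], insert U3 H3c, auto simp: left_add_zero_mat[OF mult_carrier_mat[OF mult_carrier_mat[OF adj_carrier[OF U3] H3c] U3]] left_add_zero_mat[OF mult_carrier_mat[OF adj_carrier[OF U3] H3c]])
  finally have HD: "mat_adjoint U * H * U = four_block_mat (mat 1 1 (\<lambda>_. e)) (0\<^sub>m 1 m) (0\<^sub>m m 1) D3" .
  have "diagonal_mat (four_block_mat (mat 1 1 (\<lambda>_. e)) (0\<^sub>m 1 m) (0\<^sub>m m 1) D3)"
    using dD3 D3 unfolding diagonal_mat_def by auto
  moreover have "four_block_mat (mat 1 1 (\<lambda>_. e)) (0\<^sub>m 1 m) (0\<^sub>m m 1) D3 \<in> carrier_mat (Suc m) (Suc m)"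
    using four_block_carrier_mat[OF _ D3, of "mat 1 1 (\<lambda>_. e)" 1 1] by auto
  ultimately show ?case using Uc UU HD by blast
qed

lemma sum_pair_index: "(\<Sum>a<m*(d::nat). f a) = (\<Sum>i<m. \<Sum>j<d. f (i*d+j))"
proof -
  have "(\<Sum>a<m*d. f a) = (\<Sum>i<m. sum f {i*d..<i*d+d})" by (rule sum.nat_group[where k=d and g=f and n=m, symmetric])
  also have "\<dots> = (\<Sum>i<m. \<Sum>j<d. f (i*d+j))"
  proof (rule sum.cong[OF refl])
    fix i
    have "sum f {0 + i*d..<d + i*d} = (\<Sum>j\<in>{0..<d}. f (j + i*d))" by (rule sum.shift_bounds_nat_ivl)
    thus "sum f {i*d..<i*d+d} = (\<Sum>j<d. f (i*d+j))" by (simp add: atLeast0LessThan add.commute)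
  qed
  finally show ?thesis .
qed

lemma lin_prod_inj: "(\<Prod>x\<leftarrow>xs. [:- x, 1:]) = (\<Prod>x\<leftarrow>ys. [:- (x::complex), 1:]) \<Longrightarrow> mset xs = mset ys"
proof (induction xs arbitrary: ys)
  case Nil
  hence "degree (\<Prod>x\<leftarrow>ys. [:- x, 1:]) = 0" by (metis degree_1 prod_list.Nil list.map(1))
  hence "length ys = 0" by (simp add: degree_linear_factors)
  thus ?case by simp
next
  case (Cons x xs)
  have "poly (\<Prod>x\<leftarrow>ys. [:- x, 1:]) x = 0" using Cons.prems[symmetric] by (simp add: poly_prod_list)
  hence "x \<in> set ys" by (auto simp: poly_prod_list prod_list_zero_iff)
  hence "(\<Prod>x\<leftarrow>ys. [:- x, 1:]) = [:- x, 1:] * (\<Prod>x\<leftarrow>remove1 x ys. [:- x, 1:])"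
    by (rule prod_list_map_remove1)
  with Cons.prems have "[:- x, 1:] * (\<Prod>x\<leftarrow>xs. [:- x, 1:]) = [:- x, 1:] * (\<Prod>x\<leftarrow>remove1 x ys. [:- x, 1:])"
    by (metis list.map(2) prod_list.Cons)
  hence "(\<Prod>x\<leftarrow>xs. [:- x, 1:]) = (\<Prod>x\<leftarrow>remove1 x ys. [:- x, 1:])"
    by (metis mult_cancel_left pCons_eq_0_iff one_neq_zero)
  from Cons.IH[OF this] \<open>x \<in> set ys\<close> show ?case by simp
qed



definition SP :: "nat \<Rightarrow> complex vec \<Rightarrow> real list \<Rightarrow> bool" where
  "SP d \<psi> ls \<longleftrightarrow> length ls = d \<and> sorted_wrt (\<ge>) ls \<and> (\<forall>s\<in>set ls. s \<ge> 0) \<and>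
      char_poly (mat_adjoint (coeff_mat d \<psi>) * coeff_mat d \<psi>)
        = (\<Prod>s\<leftarrow>ls. [:- complex_of_real (s^2), 1:])"

lemma prod_list_mset_eq: assumes "mset xs = mset ys" shows "prod_list (map (g :: _ \<Rightarrow> _ :: comm_monoid_mult) xs) = prod_list (map g ys)"
proof -
  have "prod_list (map g xs) = prod_mset (mset (map g xs))" by (rule prod_mset_prod_list[symmetric])
  also have "\<dots> = prod_mset (mset (map g ys))" using assms by (simp only: mset_map)
  also have "\<dots> = prod_list (map g ys)" by (rule prod_mset_prod_list)
  finally show ?thesis .
qed

lemma sum_list_mset_eq: assumes "mset xs = mset ys" shows "sum_list (map (g :: _ \<Rightarrow> _ :: comm_monoid_add) xs) = sum_list (map g ys)"
proof -
  have "sum_list (map g xs) = sum_mset (mset (map g xs))" by (rule sum_mset_sum_list[symmetric])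
  also have "\<dots> = sum_mset (mset (map g ys))" using assms by (simp only: mset_map)
  also have "\<dots> = sum_list (map g ys)" by (rule sum_mset_sum_list)
  finally show ?thesis .
qed

lemma SP_unique: assumes "SP d \<psi> l1" "SP d \<psi> l2" shows "l1 = l2"
proof -
  define f where "f s = complex_of_real (s^2)" for s :: real
  have "(\<Prod>x\<leftarrow>map f l1. [:- x, 1:]) = (\<Prod>x\<leftarrow>map f l2. [:- x, 1:])"
    using assms unfolding SP_def f_def by (simp add: o_def)
  from lin_prod_inj[OF this] have "image_mset f (mset l1) = image_mset f (mset l2)" by simp
  hence "image_mset (\<lambda>c. sqrt (Re c)) (image_mset f (mset l1)) = image_mset (\<lambda>c. sqrt (Re c)) (image_mset f (mset l2))"
    by simp
  moreover have "image_mset (\<lambda>c. sqrt (Re c)) (image_mset f (mset l)) = mset l" if "SP d \<psi> l" for l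
  proof -
    have "image_mset (\<lambda>c. sqrt (Re c)) (image_mset f (mset l)) = image_mset (\<lambda>x. x) (mset l)"
      unfolding image_mset.compositionality
      by (rule image_mset_cong, insert that, auto simp: SP_def f_def)
    thus ?thesis by simp
  qed
  ultimately have m: "mset l1 = mset l2" using assms by simp
  have s: "sorted (rev l)" if "SP d \<psi> l" for l using that unfolding SP_def by (simp add: sorted_wrt_rev)
  have "sort l2 = rev l1" by (rule properties_for_sort, insert m s[OF assms(1)], auto)
  moreover have "sort l2 = rev l2" by (rule properties_for_sort, insert s[OF assms(2)], auto)
  ultimately show ?thesis by simp
qed

lemma SP_schmidt: "SP d \<psi> l \<Longrightarrow> schmidt_list d \<psi> = l"
  unfolding schmidt_list_def SP_def[symmetric] by (rule the_equality, assumption, rule SP_unique)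

lemma coeff_mat_carrier[simp]: "coeff_mat d \<psi> \<in> carrier_mat d d"
  unfolding coeff_mat_def by simp

lemma coeff_mat_index[simp]: "i < d \<Longrightarrow> j < d \<Longrightarrow> coeff_mat d \<psi> $$ (i,j) = \<psi> $ (i*d+j)"
  unfolding coeff_mat_def by simp

lemma gram_diag_col: assumes "(X :: complex mat) \<in> carrier_mat n m" "j < m"
  shows "(mat_adjoint X * X) $$ (j,j) = complex_of_real (\<Sum>i<n. (cmod (X $$ (i,j)))^2)"
proof -
  have "(mat_adjoint X * X) $$ (j,j) = (\<Sum>i<n. cnj (X $$ (i,j)) * X $$ (i,j))"
    using assms by (simp add: scalar_prod_def atLeast0LessThan)
  also have "\<dots> = (\<Sum>i<n. complex_of_real ((cmod (X $$ (i,j)))^2))"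
    by (rule sum.cong, auto simp: complex_norm_square[symmetric] mult.commute)
  finally show ?thesis by simp
qed

lemma gram_diag_row: assumes "(X :: complex mat) \<in> carrier_mat n m" "i < n"
  shows "(X * mat_adjoint X) $$ (i,i) = complex_of_real (\<Sum>j<m. (cmod (X $$ (i,j)))^2)"
proof -
  have "(X * mat_adjoint X) $$ (i,i) = (\<Sum>j<m. X $$ (i,j) * cnj (X $$ (i,j)))"
    using assms by (simp add: scalar_prod_def atLeast0LessThan)
  also have "\<dots> = (\<Sum>j<m. complex_of_real ((cmod (X $$ (i,j)))^2))"
    by (rule sum.cong, auto simp: complex_norm_square[symmetric] mult.commute)
  finally show ?thesis by simp
qed

lemma diag_upper: "D \<in> carrier_mat n n \<Longrightarrow> diagonal_mat D \<Longrightarrow> upper_triangular D"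
  unfolding diagonal_mat_def upper_triangular_def by auto

lemma SP_exists: assumes psi: "\<psi> \<in> carrier_vec (d*d)"
  shows "\<exists>ls. SP d \<psi> ls \<and> cmod (\<Sum>i<d. \<psi> $ (i*d+i)) \<le> sum_list ls \<and>
     sum_list (map (\<lambda>s. s^2) ls) = (\<Sum>a<d*d. (cmod (\<psi> $ a))^2)"
proof -
  define A where "A = coeff_mat d \<psi>"
  have A: "A \<in> carrier_mat d d" unfolding A_def by simp
  have aA: "mat_adjoint A \<in> carrier_mat d d" using A by simp
  define G where "G = mat_adjoint A * A"
  have G: "G \<in> carrier_mat d d" unfolding G_def using mult_carrier_mat[OF aA A] .
  have Gh: "mat_adjoint G = G" unfolding G_def by (simp add: adj_mult[OF aA A])
  from spectral[OF G Gh] obtain U D where U: "U \<in> carrier_mat d d" and UU: "mat_adjoint U * U = 1\<^sub>m d"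
    and D: "D \<in> carrier_mat d d" and dD: "diagonal_mat D" and GD: "mat_adjoint U * G * U = D" by blast
  have aU: "mat_adjoint U \<in> carrier_mat d d" using U by simp
  have UU': "U * mat_adjoint U = 1\<^sub>m d" by (rule mat_mult_left_right_inverse[OF aU U UU])
  define B where "B = A * U"
  have Bc: "B \<in> carrier_mat d d" unfolding B_def using mult_carrier_mat[OF A U] .
  have BB: "mat_adjoint B * B = D"
  proof -
    have "mat_adjoint B * B = (mat_adjoint U * mat_adjoint A) * (A * U)"
      unfolding B_def by (simp add: adj_mult[OF A U])
    also have "\<dots> = mat_adjoint U * G * U" unfolding G_def by (rule assoc4[OF aU aA A U])
    finally show ?thesis using GD by simp
  qed
  define lam where "lam j = (\<Sum>i<d. (cmod (B $$ (i,j)))^2)" for j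
  have lam0: "lam j \<ge> 0" for j unfolding lam_def by (simp add: sum_nonneg)
  have Djj: "D $$ (j,j) = complex_of_real (lam j)" if "j < d" for j
    using gram_diag_col[OF Bc that] BB unfolding lam_def by simp
  have GUD: "G = U * D * mat_adjoint U"
  proof -
    have "U * D * mat_adjoint U = (U * mat_adjoint U) * G * (U * mat_adjoint U)"
      unfolding GD[symmetric] by (rule assoc5[OF U aU U aU G, symmetric])
    thus ?thesis unfolding UU' using G by simp
  qed
  have "similar_mat G D" unfolding similar_mat_def similar_mat_wit_def Let_def
    by (rule exI[of _ U], rule exI[of _ "mat_adjoint U"], insert G D U aU UU UU' GUD, auto)
  hence "char_poly G = char_poly D" by (rule char_poly_similar)
  also have "\<dots> = (\<Prod>a\<leftarrow>diag_mat D. [:- a, 1:])" by (rule char_poly_upper_triangular[OF D diag_upper[OF D dD]])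
  also have "diag_mat D = map (\<lambda>j. complex_of_real (lam j)) [0..<d]"
    unfolding diag_mat_def using D Djj by auto
  finally have cpG: "char_poly G = (\<Prod>j\<leftarrow>[0..<d]. [:- complex_of_real (lam j), 1:])" by (simp add: o_def)
  define sl where "sl = map (\<lambda>j. sqrt (lam j)) [0..<d]"
  define ls where "ls = rev (sort sl)"
  have mls: "mset ls = mset sl" unfolding ls_def by simp
  have "SP d \<psi> ls"
    unfolding SP_def
  proof (intro conjI)
    show "length ls = d" unfolding ls_def sl_def by simp
    show "sorted_wrt (\<ge>) ls" unfolding ls_def using sorted_sort[of sl] by (simp add: sorted_wrt_rev)
    show "\<forall>s\<in>set ls. s \<ge> 0" unfolding ls_def sl_def using lam0 by auto
    have "(\<Prod>s\<leftarrow>ls. [:- complex_of_real (s^2), 1:]) = (\<Prod>s\<leftarrow>sl. [:- complex_of_real (s^2), 1:])"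
      by (rule prod_list_mset_eq[OF mls])
    also have "\<dots> = (\<Prod>j\<leftarrow>[0..<d]. [:- complex_of_real (lam j), 1:])"
      unfolding sl_def map_map o_def
      by (rule arg_cong[where f=prod_list], rule map_cong, simp, simp add: lam0 del: of_real_power)
    finally show "char_poly (mat_adjoint (coeff_mat d \<psi>) * coeff_mat d \<psi>) = (\<Prod>s\<leftarrow>ls. [:- complex_of_real (s^2), 1:])"
      using cpG unfolding G_def A_def by simp
  qed
  moreover have "sum_list ls = (\<Sum>j<d. sqrt (lam j))"
    using sum_list_mset_eq[OF mls, of "\<lambda>x. x"] unfolding sl_def by (simp add: sum_list_sum_nth atLeast0LessThan)
  moreover have "sum_list (map (\<lambda>s. s^2) ls) = (\<Sum>j<d. lam j)"
    using sum_list_mset_eq[OF mls, of "\<lambda>s. s^2"] lam0 unfolding sl_def by (simp add: sum_list_sum_nth atLeast0LessThan)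
  moreover have "(\<Sum>j<d. lam j) = (\<Sum>a<d*d. (cmod (\<psi> $ a))^2)"
  proof -
    have BBr: "B * mat_adjoint B = A * mat_adjoint A"
    proof -
      have "B * mat_adjoint B = (A * U) * (mat_adjoint U * mat_adjoint A)"
        unfolding B_def by (simp add: adj_mult[OF A U])
      also have "\<dots> = A * (U * mat_adjoint U) * mat_adjoint A" by (rule assoc4[OF A U aU aA])
      finally show ?thesis unfolding UU' using A by simp
    qed
    have "(\<Sum>j<d. lam j) = (\<Sum>i<d. \<Sum>j<d. (cmod (B $$ (i,j)))^2)" unfolding lam_def by (rule sum.swap)
    also have "\<dots> = (\<Sum>i<d. \<Sum>j<d. (cmod (A $$ (i,j)))^2)"
    proof (rule sum.cong[OF refl])
      fix i assume "i \<in> {..<d}"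
      hence i: "i < d" by simp
      have "complex_of_real (\<Sum>j<d. (cmod (B $$ (i,j)))^2) = complex_of_real (\<Sum>j<d. (cmod (A $$ (i,j)))^2)"
        using gram_diag_row[OF Bc i] gram_diag_row[OF A i] BBr by simp
      thus "(\<Sum>j<d. (cmod (B $$ (i,j)))^2) = (\<Sum>j<d. (cmod (A $$ (i,j)))^2)" by (simp only: of_real_eq_iff)
    qed
    also have "\<dots> = (\<Sum>a<d*d. (cmod (\<psi> $ a))^2)" unfolding sum_pair_index[of _ d d] A_def by simp
    finally show ?thesis .
  qed
  moreover have "cmod (\<Sum>i<d. \<psi> $ (i*d+i)) \<le> (\<Sum>j<d. sqrt (lam j))"
  proof -
    have AUU: "A = B * mat_adjoint U" unfolding B_def using assoc_mult_mat[OF A U aU] UU' A by simp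
    have "(\<Sum>i<d. \<psi> $ (i*d+i)) = (\<Sum>i<d. A $$ (i,i))" unfolding A_def by simp
    also have "\<dots> = (\<Sum>i<d. \<Sum>j<d. B $$ (i,j) * cnj (U $$ (i,j)))"
    proof (rule sum.cong[OF refl])
      fix i assume "i \<in> {..<d}"
      hence i: "i < d" by simp
      show "A $$ (i,i) = (\<Sum>j<d. B $$ (i,j) * cnj (U $$ (i,j)))"
        unfolding AUU using i Bc U by (simp add: scalar_prod_def atLeast0LessThan)
    qed
    also have "\<dots> = (\<Sum>j<d. \<Sum>i<d. B $$ (i,j) * cnj (U $$ (i,j)))" by (rule sum.swap)
    finally have tr: "(\<Sum>i<d. \<psi> $ (i*d+i)) = (\<Sum>j<d. \<Sum>i<d. B $$ (i,j) * cnj (U $$ (i,j)))" .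
    have colU: "(\<Sum>i<d. (cmod (U $$ (i,j)))^2) = 1" if j: "j < d" for j
    proof -
      have "complex_of_real (\<Sum>i<d. (cmod (U $$ (i,j)))^2) = 1"
        using gram_diag_col[OF U j] UU j by simp
      thus ?thesis by (metis of_real_eq_1_iff)
    qed
    have "cmod (\<Sum>i<d. \<psi> $ (i*d+i)) \<le> (\<Sum>j<d. cmod (\<Sum>i<d. B $$ (i,j) * cnj (U $$ (i,j))))"
      unfolding tr by (rule norm_sum)
    also have "\<dots> \<le> (\<Sum>j<d. sqrt (lam j))"
    proof (rule sum_mono)
      fix j assume "j \<in> {..<d}"
      hence j: "j < d" by simp
      have "cmod (\<Sum>i<d. B $$ (i,j) * cnj (U $$ (i,j))) \<le> (\<Sum>i<d. cmod (B $$ (i,j) * cnj (U $$ (i,j))))"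
        by (rule norm_sum)
      also have "\<dots> = (\<Sum>i<d. \<bar>cmod (B $$ (i,j))\<bar> * \<bar>cmod (U $$ (i,j))\<bar>)" by (simp add: norm_mult)
      also have "\<dots> \<le> L2_set (\<lambda>i. cmod (B $$ (i,j))) {..<d} * L2_set (\<lambda>i. cmod (U $$ (i,j))) {..<d}"
        by (rule L2_set_mult_ineq)
      also have "\<dots> = sqrt (lam j)" unfolding L2_set_def lam_def colU[OF j] by simp
      finally show "cmod (\<Sum>i<d. B $$ (i,j) * cnj (U $$ (i,j))) \<le> sqrt (lam j)" .
    qed
    finally show ?thesis .
  qed
  ultimately show ?thesis by metis
qed



lemma cs_sum: "(\<Sum>i<k. (f i :: real))^2 \<le> real k * (\<Sum>i<k. (f i)^2)"
proof -
  have "(\<Sum>i<k. f i) \<le> (\<Sum>i<k. \<bar>f i\<bar> * \<bar>1\<bar>)" by (rule sum_mono, simp)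
  also have "\<dots> \<le> L2_set f {..<k} * L2_set (\<lambda>_. 1) {..<k}" by (rule L2_set_mult_ineq)
  finally have a: "(\<Sum>i<k. f i) \<le> L2_set f {..<k} * L2_set (\<lambda>_. 1) {..<k}" .
  have "- (\<Sum>i<k. f i) = (\<Sum>i<k. - f i)" by (simp add: sum_negf)
  also have "\<dots> \<le> (\<Sum>i<k. \<bar>f i\<bar> * \<bar>1\<bar>)" by (rule sum_mono, simp)
  also have "\<dots> \<le> L2_set f {..<k} * L2_set (\<lambda>_. 1) {..<k}" by (rule L2_set_mult_ineq)
  finally have b: "- (\<Sum>i<k. f i) \<le> L2_set f {..<k} * L2_set (\<lambda>_. 1) {..<k}" .
  have "\<bar>\<Sum>i<k. f i\<bar> \<le> L2_set f {..<k} * L2_set (\<lambda>_. 1) {..<k}" using a b by linarith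
  hence "\<bar>\<Sum>i<k. f i\<bar>^2 \<le> (L2_set f {..<k} * L2_set (\<lambda>_. 1) {..<k})^2"
    by (rule power_mono, simp)
  also have "\<dots> = (\<Sum>i<k. (f i)^2) * real k"
    unfolding L2_set_def power_mult_distrib by (simp add: sum_nonneg)
  finally show ?thesis by (simp add: mult.commute)
qed

lemma alg_key:
  fixes k t S x Q1 Q :: real
  assumes k: "k \<ge> 1" and t: "0 < t" "t < 1" and S: "S \<ge> 0" and x: "0 \<le> x" "x \<le> t / k * S"
    and Q1: "S^2 \<le> k * Q1" and Q: "Q1 + x^2 \<le> Q"
  shows "(S + x)^2 \<le> (k + t)^2 / (k + t^2) * Q"
proof -
  have kx: "k * x \<le> t * S" using x k by (simp add: field_simps)
  have f1: "0 \<le> t * S - k * x" using kx by simp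
  have "k * (k + 2*t - 1) * x \<le> t * (k + 2*t - 1) * S"
    using mult_left_mono[OF kx, of "k + 2*t - 1"] k t by (simp add: algebra_simps)
  also have "\<dots> \<le> (2*k + t - k*t) * S"
  proof (rule mult_right_mono[OF _ S])
    have "(2*k + t - k*t) - t * (k + 2*t - 1) = 2*(k+t)*(1-t)" by (simp add: algebra_simps)
    moreover have "0 \<le> 2*(k+t)*(1-t)" using k t by simp
    ultimately show "t * (k + 2*t - 1) \<le> 2*k + t - k*t" by linarith
  qed
  finally have f2: "0 \<le> (2*k + t - k*t) * S - k * (k + 2*t - 1) * x" by simp
  have id: "(k+t)^2 * (S^2 + k*x^2) - k*(k+t^2)*(S+x)^2
      = (t*S - k*x) * ((2*k + t - k*t) * S - k * (k + 2*t - 1) * x)"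
    by (simp add: algebra_simps power2_eq_square)
  have "0 \<le> (t*S - k*x) * ((2*k + t - k*t) * S - k * (k + 2*t - 1) * x)" using f1 f2 by simp
  hence main: "k*(k+t^2)*(S+x)^2 \<le> (k+t)^2 * (S^2 + k*x^2)" using id by linarith
  have kt: "0 < k + t^2" using k by (simp add: add_pos_nonneg)
  have "(k+t)^2 * (S^2 + k*x^2) \<le> (k+t)^2 * (k * Q)"
  proof (rule mult_left_mono)
    show "S^2 + k*x^2 \<le> k * Q" using Q1 Q k by (smt (verit) mult_left_mono distrib_left)
  qed simp
  with main have "k*((k+t^2)*(S+x)^2) \<le> k*((k+t)^2 * Q)" by (simp add: algebra_simps)
  hence "(k+t^2)*(S+x)^2 \<le> (k+t)^2 * Q" using k by simp
  thus ?thesis using kt by (simp add: field_simps)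
qed

lemma split_sum: "k \<le> (d::nat) \<Longrightarrow> sum g {..<d} = sum g {..<k} + sum g {k..<d}"
  by (metis atLeast0LessThan sum.atLeastLessThan_concat zero_le)

lemma list_bound:
  fixes s :: "real list" and k d :: nat and t :: real
  assumes len: "length s = d" and nn: "\<forall>x\<in>set s. x \<ge> 0" and k: "1 \<le> k" and kd: "k \<le> d"
    and t: "0 \<le> t" "t < 1"
    and z0: "t = 0 \<Longrightarrow> \<forall>i. k \<le> i \<longrightarrow> i < d \<longrightarrow> s!i = 0"
    and z1: "t > 0 \<Longrightarrow> k < d \<and> (\<forall>i. k+1 \<le> i \<longrightarrow> i < d \<longrightarrow> s!i = 0) \<and> s!k \<le> t / k * (\<Sum>i<k. s!i)"
  shows "(sum_list s)^2 \<le> (k+t)^2/(k+t^2) * sum_list (map (\<lambda>x. x^2) s)"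
proof -
  have nn': "i < d \<Longrightarrow> s!i \<ge> 0" for i using nn len by auto
  have s1: "sum_list s = (\<Sum>i<d. s!i)" using len by (simp add: sum_list_sum_nth atLeast0LessThan)
  have s2: "sum_list (map (\<lambda>x. x^2) s) = (\<Sum>i<d. (s!i)^2)" using len by (simp add: sum_list_sum_nth atLeast0LessThan)
  define S where "S = (\<Sum>i<k. s!i)"
  define Q1 where "Q1 = (\<Sum>i<k. (s!i)^2)"
  define Q where "Q = (\<Sum>i<d. (s!i)^2)"
  have S0: "S \<ge> 0" unfolding S_def using nn' kd by (intro sum_nonneg) auto
  have CS: "S^2 \<le> k * Q1" unfolding S_def Q1_def by (rule cs_sum)
  show ?thesis
  proof (cases "t = 0")
    case True
    have "(\<Sum>i<d. s!i) = S + (\<Sum>i\<in>{k..<d}. s!i)" unfolding S_def by (rule split_sum[OF kd])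
    also have "(\<Sum>i\<in>{k..<d}. s!i) = 0" using z0[OF True] by simp
    finally have e1: "sum_list s = S" using s1 by simp
    have "Q = Q1 + (\<Sum>i\<in>{k..<d}. (s!i)^2)" unfolding Q_def Q1_def by (rule split_sum[OF kd])
    moreover have "(\<Sum>i\<in>{k..<d}. (s!i)^2) \<ge> 0" by (rule sum_nonneg, simp)
    ultimately have "Q1 \<le> Q" by simp
    hence "S^2 \<le> k * Q" using CS k by (smt (verit) mult_left_mono of_nat_0_le_iff)
    thus ?thesis using True e1 s2 k unfolding Q_def by (simp add: power2_eq_square)
  next
    case False
    hence tp: "t > 0" using t by simp
    from z1[OF tp] have kd': "k < d" and zz: "\<forall>i. k+1 \<le> i \<longrightarrow> i < d \<longrightarrow> s!i = 0"
      and xk: "s!k \<le> t / k * S" unfolding S_def by auto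
    have sp: "sum g {k..<d} = g k + sum g {Suc k..<d}" for g :: "nat \<Rightarrow> real"
      using kd' by (simp add: sum.atLeast_Suc_lessThan)
    have "(\<Sum>i<d. s!i) = S + (s!k + (\<Sum>i\<in>{Suc k..<d}. s!i))" unfolding S_def split_sum[OF kd] sp ..
    also have "(\<Sum>i\<in>{Suc k..<d}. s!i) = 0" using zz by simp
    finally have e1: "sum_list s = S + s!k" using s1 by simp
    have "Q = Q1 + ((s!k)^2 + (\<Sum>i\<in>{Suc k..<d}. (s!i)^2))" unfolding Q_def Q1_def split_sum[OF kd] sp ..
    moreover have "(\<Sum>i\<in>{Suc k..<d}. (s!i)^2) \<ge> 0" by (rule sum_nonneg, simp)
    ultimately have QQ: "Q1 + (s!k)^2 \<le> Q" by simp
    have "(S + s!k)^2 \<le> (k + t)^2 / (k + t^2) * Q"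
      by (rule alg_key[OF _ tp t(2) S0 nn'[OF kd'] xk CS QQ], use k in simp)
    thus ?thesis using e1 s2 unfolding Q_def by simp
  qed
qed



lemma idx_div[simp]: "j < d \<Longrightarrow> (i * d + j) div d = (i::nat)"
  by simp
lemma idx_mod[simp]: "j < d \<Longrightarrow> (i * d + j) mod d = (j::nat)"
  by simp

lemma idx_lt: assumes "i < d" "j < (d::nat)" shows "i * d + j < d * d"
proof -
  have "i * d + j < i * d + d" using assms by simp
  also have "\<dots> = Suc i * d" by simp
  also have "\<dots> \<le> d * d" using assms(1) by (intro mult_le_mono1) simp
  finally show ?thesis .
qed

lemma schmidt_diag:
  fixes c :: "nat \<Rightarrow> real"
  assumes c0: "\<And>i. i < d \<Longrightarrow> c i \<ge> 0" and cm: "\<And>i j. i \<le> j \<Longrightarrow> j < d \<Longrightarrow> c j \<le> c i"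
  and psi: "\<psi> = vec (d*d) (\<lambda>a. if a div d = a mod d then complex_of_real (c (a mod d)) else 0)"
  shows "schmidt_list d \<psi> = map c [0..<d]"
proof (rule SP_schmidt)
  define A where "A = coeff_mat d \<psi>"
  have A: "A \<in> carrier_mat d d" unfolding A_def by simp
  have Aij: "A $$ (i,j) = (if i = j then complex_of_real (c i) else 0)" if "i < d" "j < d" for i j
  proof -
    have "i * d + j < d * d" using that by (rule idx_lt)
    thus ?thesis unfolding A_def using that psi by auto
  qed
  define G where "G = mat_adjoint A * A"
  have G: "G \<in> carrier_mat d d" unfolding G_def using mult_carrier_mat[OF adj_carrier[OF A] A] .
  have Gij: "G $$ (i,j) = (if i = j then complex_of_real ((c i)^2) else 0)" if ij: "i < d" "j < d" for i j
  proof -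
    have "G $$ (i,j) = (\<Sum>l<d. cnj (A $$ (l,i)) * A $$ (l,j))"
      unfolding G_def using A ij by (simp add: scalar_prod_def atLeast0LessThan)
    also have "\<dots> = (\<Sum>l<d. if l = i then (if i = j then complex_of_real ((c i)^2) else 0) else 0)"
      by (rule sum.cong, insert ij, auto simp: Aij power2_eq_square)
    also have "\<dots> = (if i = j then complex_of_real ((c i)^2) else 0)" using ij by simp
    finally show ?thesis .
  qed
  have dG: "diagonal_mat G" unfolding diagonal_mat_def using G Gij by auto
  have "char_poly G = (\<Prod>a\<leftarrow>diag_mat G. [:- a, 1:])" by (rule char_poly_upper_triangular[OF G diag_upper[OF G dG]])
  also have "diag_mat G = map (\<lambda>j. complex_of_real ((c j)^2)) [0..<d]"
    unfolding diag_mat_def using G Gij by auto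
  finally have cp: "char_poly G = (\<Prod>s\<leftarrow>map c [0..<d]. [:- complex_of_real (s^2), 1:])"
    by (simp add: o_def del: of_real_power)
  show "SP d \<psi> (map c [0..<d])" unfolding SP_def
  proof (intro conjI)
    show "sorted_wrt (\<ge>) (map c [0..<d])" unfolding sorted_wrt_iff_nth_less using cm by auto
    show "\<forall>s\<in>set (map c [0..<d]). s \<ge> 0" using c0 by auto
    show "char_poly (mat_adjoint (coeff_mat d \<psi>) * coeff_mat d \<psi>) = (\<Prod>s\<leftarrow>map c [0..<d]. [:- complex_of_real (s^2), 1:])"
      using cp unfolding G_def A_def .
  qed simp
qed

lemma omega_idx: "a < d*d \<Longrightarrow> omega d $ a = (if a div d = a mod d then complex_of_real (1 / sqrt (real d)) else 0)"
  unfolding omega_def by simp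

lemma qform_P: "qform d (P_omega d) \<psi> = complex_of_real ((cmod (\<Sum>i<d. \<psi> $ (i*d+i)))^2 / real d)"
proof -
  define z where "z = (\<Sum>b<d*d. cnj (omega d $ b) * \<psi> $ b)"
  have "qform d (P_omega d) \<psi> = (\<Sum>a<d*d. \<Sum>b<d*d. (cnj (\<psi> $ a) * omega d $ a) * (cnj (omega d $ b) * \<psi> $ b))"
    unfolding qform_def P_omega_def by (rule sum.cong[OF refl], rule sum.cong[OF refl], auto simp: algebra_simps)
  also have "\<dots> = (\<Sum>a<d*d. cnj (\<psi> $ a) * omega d $ a) * z"
    unfolding z_def by (simp add: sum_product)
  also have "(\<Sum>a<d*d. cnj (\<psi> $ a) * omega d $ a) = cnj z"
    unfolding z_def by (simp add: omega_idx mult.commute)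
  finally have q: "qform d (P_omega d) \<psi> = complex_of_real ((cmod z)^2)"
    by (simp add: complex_norm_square[symmetric] mult.commute)
  have "z = (\<Sum>i<d. \<Sum>j<d. cnj (omega d $ (i*d+j)) * \<psi> $ (i*d+j))" unfolding z_def by (rule sum_pair_index)
  also have "\<dots> = (\<Sum>i<d. complex_of_real (1 / sqrt (real d)) * \<psi> $ (i*d+i))"
  proof (rule sum.cong[OF refl])
    fix i assume "i \<in> {..<d}"
    hence i: "i < d" by simp
    have lt: "i*d+j < d*d" if "j < d" for j
      using i that by (rule idx_lt)
    have "(\<Sum>j<d. cnj (omega d $ (i*d+j)) * \<psi> $ (i*d+j)) = (\<Sum>j<d. if j = i then complex_of_real (1 / sqrt (real d)) * \<psi> $ (i*d+i) else 0)"
      by (rule sum.cong[OF refl], auto simp: omega_idx lt)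
    also have "\<dots> = complex_of_real (1 / sqrt (real d)) * \<psi> $ (i*d+i)" using i by simp
    finally show "(\<Sum>j<d. cnj (omega d $ (i*d+j)) * \<psi> $ (i*d+j)) = complex_of_real (1 / sqrt (real d)) * \<psi> $ (i*d+i)" .
  qed
  also have "\<dots> = complex_of_real (1 / sqrt (real d)) * (\<Sum>i<d. \<psi> $ (i*d+i))" by (simp add: sum_distrib_left)
  finally have "(cmod z)^2 = (1 / sqrt (real d))^2 * (cmod (\<Sum>i<d. \<psi> $ (i*d+i)))^2"
    by (simp add: norm_divide power_divide)
  also have "\<dots> = (cmod (\<Sum>i<d. \<psi> $ (i*d+i)))^2 / real d" by (simp add: power_divide)
  finally show ?thesis using q by simp
qed

lemma alpha_facts:
  assumes a1: "1 \<le> \<alpha>" and ad: "\<alpha> \<le> real d"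
  shows "1 \<le> nat \<lfloor>\<alpha>\<rfloor>" "nat \<lfloor>\<alpha>\<rfloor> \<le> d" "0 \<le> \<alpha> - real (nat \<lfloor>\<alpha>\<rfloor>)" "\<alpha> - real (nat \<lfloor>\<alpha>\<rfloor>) < 1"
    "\<alpha> - real (nat \<lfloor>\<alpha>\<rfloor>) = 0 \<Longrightarrow> nat \<lceil>\<alpha>\<rceil> = nat \<lfloor>\<alpha>\<rfloor>"
    "\<alpha> - real (nat \<lfloor>\<alpha>\<rfloor>) > 0 \<Longrightarrow> nat \<lceil>\<alpha>\<rceil> = nat \<lfloor>\<alpha>\<rfloor> + 1 \<and> nat \<lfloor>\<alpha>\<rfloor> < d"
    "real_of_int \<lfloor>\<alpha>\<rfloor> = real (nat \<lfloor>\<alpha>\<rfloor>)"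
proof -
  have f1: "\<lfloor>\<alpha>\<rfloor> \<ge> 1" using a1 by (metis le_floor_iff of_int_1)
  show rk: "real_of_int \<lfloor>\<alpha>\<rfloor> = real (nat \<lfloor>\<alpha>\<rfloor>)" using f1 by simp
  show "1 \<le> nat \<lfloor>\<alpha>\<rfloor>" using nat_mono[OF f1] by simp
  have "\<lfloor>\<alpha>\<rfloor> \<le> int d" using ad by (simp add: floor_le_iff)
  thus "nat \<lfloor>\<alpha>\<rfloor> \<le> d" by simp
  show "0 \<le> \<alpha> - real (nat \<lfloor>\<alpha>\<rfloor>)" using rk of_int_floor_le[of \<alpha>] by linarith
  show "\<alpha> - real (nat \<lfloor>\<alpha>\<rfloor>) < 1" using rk real_of_int_floor_add_one_gt[of \<alpha>] by linarith
  show "nat \<lceil>\<alpha>\<rceil> = nat \<lfloor>\<alpha>\<rfloor>" if "\<alpha> - real (nat \<lfloor>\<alpha>\<rfloor>) = 0"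
  proof -
    have "\<alpha> = real_of_int \<lfloor>\<alpha>\<rfloor>" using that rk by linarith
    hence "\<lceil>\<alpha>\<rceil> = \<lfloor>\<alpha>\<rfloor>" by (metis ceiling_of_int)
    thus ?thesis by simp
  qed
  show "nat \<lceil>\<alpha>\<rceil> = nat \<lfloor>\<alpha>\<rfloor> + 1 \<and> nat \<lfloor>\<alpha>\<rfloor> < d" if "\<alpha> - real (nat \<lfloor>\<alpha>\<rfloor>) > 0"
  proof
    have lt: "real_of_int \<lfloor>\<alpha>\<rfloor> < \<alpha>" using that rk by simp
    have "\<lceil>\<alpha>\<rceil> = \<lfloor>\<alpha>\<rfloor> + 1"
      by (rule ceiling_unique, insert lt real_of_int_floor_add_one_gt[of \<alpha>], auto)
    thus "nat \<lceil>\<alpha>\<rceil> = nat \<lfloor>\<alpha>\<rfloor> + 1" using f1 by (simp add: nat_add_distrib)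
    have "real (nat \<lfloor>\<alpha>\<rfloor>) < real d" using lt rk ad by linarith
    thus "nat \<lfloor>\<alpha>\<rfloor> < d" by simp
  qed
qed

definition Mval :: "real \<Rightarrow> real" where
  "Mval \<alpha> = (real (nat \<lfloor>\<alpha>\<rfloor>) + (\<alpha> - real (nat \<lfloor>\<alpha>\<rfloor>)))^2 / (real (nat \<lfloor>\<alpha>\<rfloor>) + (\<alpha> - real (nat \<lfloor>\<alpha>\<rfloor>))^2)"

lemma sum_shift1: "(\<Sum>j=1..k. f (j - 1)) = (\<Sum>i<k. f (i::nat))"
  by (induct k) auto

lemma adm_bound:
  assumes adm: "admissible d \<alpha> \<psi>" and a1: "1 \<le> \<alpha>" and ad: "\<alpha> \<le> real d"
  shows "Re (qform d (P_omega d) \<psi>) \<le> Mval \<alpha> / real d"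
proof -
  define k where "k = nat \<lfloor>\<alpha>\<rfloor>"
  define t where "t = \<alpha> - real k"
  define r where "r = nat \<lceil>\<alpha>\<rceil>"
  note af = alpha_facts[OF a1 ad]
  have k1: "1 \<le> k" unfolding k_def by (rule af(1))
  have kd: "k \<le> d" unfolding k_def by (rule af(2))
  have t0: "0 \<le> t" unfolding t_def k_def by (rule af(3))
  have t1: "t < 1" unfolding t_def k_def by (rule af(4))
  have rk0: "t = 0 \<Longrightarrow> r = k" unfolding t_def k_def r_def by (rule af(5))
  have rk1: "t > 0 \<Longrightarrow> r = k + 1 \<and> k < d" unfolding t_def k_def r_def by (rule af(6))
  from adm have unit: "unit_vector d \<psi>" and z: "\<forall>j. r+1 \<le> j \<and> j \<le> d \<longrightarrow> schmidt d \<psi> j = 0"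
    and rt: "t > 0 \<longrightarrow> schmidt d \<psi> (k+1) \<le> t / real k * (\<Sum>j=1..k. schmidt d \<psi> j)"
    unfolding admissible_def Let_def k_def[symmetric] t_def[symmetric] r_def[symmetric] by blast+
  from unit have psi: "\<psi> \<in> carrier_vec (d*d)" unfolding unit_vector_def by auto
  from unit have n1: "(\<Sum>a<d*d. (cmod (\<psi> $ a))^2) = 1" unfolding unit_vector_def by auto
  from SP_exists[OF psi] obtain ls where SPl: "SP d \<psi> ls" and tr: "cmod (\<Sum>i<d. \<psi> $ (i*d+i)) \<le> sum_list ls"
    and sq: "sum_list (map (\<lambda>s. s^2) ls) = (\<Sum>a<d*d. (cmod (\<psi> $ a))^2)" by blast
  have sl: "schmidt_list d \<psi> = ls" by (rule SP_schmidt[OF SPl])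
  have sch: "schmidt d \<psi> j = ls ! (j - 1)" for j unfolding schmidt_def sl ..
  have len: "length ls = d" and nn: "\<forall>x\<in>set ls. x \<ge> 0" using SPl unfolding SP_def by auto
  have "(sum_list ls)^2 \<le> (k+t)^2/(k+t^2) * sum_list (map (\<lambda>x. x^2) ls)"
  proof (rule list_bound[OF len nn k1 kd t0 t1])
    assume "t = 0"
    hence r: "r = k" by (rule rk0)
    show "\<forall>i. k \<le> i \<longrightarrow> i < d \<longrightarrow> ls!i = 0"
    proof (intro allI impI)
      fix i assume "k \<le> i" "i < d"
      hence "schmidt d \<psi> (Suc i) = 0" using z r by auto
      thus "ls ! i = 0" unfolding sch by simp
    qed
  next
    assume tp: "t > 0"
    hence r: "r = k + 1" and kd': "k < d" using rk1 by auto
    have zz: "\<forall>i. k+1 \<le> i \<longrightarrow> i < d \<longrightarrow> ls!i = 0"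
    proof (intro allI impI)
      fix i assume "k + 1 \<le> i" "i < d"
      hence "schmidt d \<psi> (Suc i) = 0" using z r by auto
      thus "ls ! i = 0" unfolding sch by simp
    qed
    have "(\<Sum>j=1..k. schmidt d \<psi> j) = (\<Sum>i<k. ls ! i)" unfolding sch by (rule sum_shift1)
    moreover have "schmidt d \<psi> (k+1) = ls ! k" unfolding sch by simp
    ultimately have "ls ! k \<le> t / real k * (\<Sum>i<k. ls ! i)" using rt tp by simp
    thus "k < d \<and> (\<forall>i. k+1 \<le> i \<longrightarrow> i < d \<longrightarrow> ls!i = 0) \<and> ls!k \<le> t / k * (\<Sum>i<k. ls!i)"
      using kd' zz by simp
  qed
  also have "\<dots> = Mval \<alpha>" unfolding Mval_def sq n1 k_def t_def by simp
  finally have b1: "(sum_list ls)^2 \<le> Mval \<alpha>" .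
  have "(cmod (\<Sum>i<d. \<psi> $ (i*d+i)))^2 \<le> (sum_list ls)^2" by (rule power_mono[OF tr], simp)
  with b1 have "(cmod (\<Sum>i<d. \<psi> $ (i*d+i)))^2 \<le> Mval \<alpha>" by simp
  thus ?thesis unfolding qform_P by (simp add: divide_right_mono)
qed

lemma sum_step: "k \<le> d \<Longrightarrow> (\<Sum>i<d. if i < k then a else if i = k then b else 0) = real k * a + (if k < d then b else (0::real))"
proof -
  assume kd: "k \<le> d"
  let ?g = "\<lambda>i. if i < k then a else if i = k then b else (0::real)"
  have "sum ?g {..<d} = sum ?g {..<k} + sum ?g {k..<d}" by (rule split_sum[OF kd])
  moreover have "sum ?g {..<k} = real k * a" by simp
  moreover have "sum ?g {k..<d} = (if k < d then b else 0)"
  proof (cases "k < d")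
    case True
    hence "sum ?g {k..<d} = ?g k + sum ?g {Suc k..<d}" by (simp add: sum.atLeast_Suc_lessThan)
    moreover have "sum ?g {Suc k..<d} = 0" by (rule sum.neutral, auto)
    ultimately show ?thesis using True by simp
  next
    case False
    thus ?thesis using kd by simp
  qed
  ultimately show ?thesis by simp
qed

lemma witness:
  assumes a1: "1 \<le> \<alpha>" and ad: "\<alpha> \<le> real d"
  shows "\<exists>\<psi>. admissible d \<alpha> \<psi> \<and> Re (qform d (P_omega d) \<psi>) = Mval \<alpha> / real d"
proof -
  define k where "k = nat \<lfloor>\<alpha>\<rfloor>"
  define t where "t = \<alpha> - real k"
  define r where "r = nat \<lceil>\<alpha>\<rceil>"
  note af = alpha_facts[OF a1 ad]
  have k1: "1 \<le> k" unfolding k_def by (rule af(1))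
  have kd: "k \<le> d" unfolding k_def by (rule af(2))
  have t0: "0 \<le> t" unfolding t_def k_def by (rule af(3))
  have t1: "t < 1" unfolding t_def k_def by (rule af(4))
  have rk0: "t = 0 \<Longrightarrow> r = k" unfolding t_def k_def r_def by (rule af(5))
  have rk1: "t > 0 \<Longrightarrow> r = k + 1 \<and> k < d" unfolding t_def k_def r_def by (rule af(6))
  have M: "Mval \<alpha> = (real k + t)^2 / (real k + t^2)" unfolding Mval_def k_def t_def ..
  define N where "N = sqrt (real k + t^2)"
  have kt: "real k + t^2 > 0" using k1 by (simp add: add_pos_nonneg)
  have N0: "N > 0" unfolding N_def using kt by simp
  have N2: "N^2 = real k + t^2" unfolding N_def using kt by simp
  define c where "c i = (if i < k then 1/N else if i = k then t/N else 0)" for i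
  define \<psi> where "\<psi> = vec (d*d) (\<lambda>a. if a div d = a mod d then complex_of_real (c (a mod d)) else 0)"
  have c0: "c i \<ge> 0" for i unfolding c_def using N0 t0 by auto
  have cm: "c j \<le> c i" if "i \<le> j" "j < d" for i j
    unfolding c_def using that N0 t0 t1 by (auto simp: divide_right_mono)
  have sl: "schmidt_list d \<psi> = map c [0..<d]" by (rule schmidt_diag[OF c0 cm \<psi>_def])
  have sch: "schmidt d \<psi> j = c (j - 1)" if "1 \<le> j" "j \<le> d" for j
    unfolding schmidt_def sl using that by simp
  have kcase: "k < d \<or> t = 0" using rk1 t0 by force
  have psi_idx: "\<psi> $ (i*d+j) = (if i = j then complex_of_real (c i) else 0)" if "i < d" "j < d" for i j
    unfolding \<psi>_def using that idx_lt[OF that] by auto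
  have unit: "unit_vector d \<psi>"
    unfolding unit_vector_def
  proof
    show "\<psi> \<in> carrier_vec (d*d)" unfolding \<psi>_def by simp
    have "(\<Sum>a<d*d. (cmod (\<psi> $ a))^2) = (\<Sum>i<d. \<Sum>j<d. (cmod (\<psi> $ (i*d+j)))^2)" by (rule sum_pair_index)
    also have "\<dots> = (\<Sum>i<d. (c i)^2)"
    proof (rule sum.cong[OF refl])
      fix i assume "i \<in> {..<d}"
      hence i: "i < d" by simp
      have "(\<Sum>j<d. (cmod (\<psi> $ (i*d+j)))^2) = (\<Sum>j<d. if j = i then (c i)^2 else 0)"
        by (rule sum.cong[OF refl], auto simp: psi_idx i)
      also have "\<dots> = (c i)^2" using i by simp
      finally show "(\<Sum>j<d. (cmod (\<psi> $ (i*d+j)))^2) = (c i)^2" .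
    qed
    also have "\<dots> = (\<Sum>i<d. if i < k then 1/N^2 else if i = k then t^2/N^2 else 0)"
      by (rule sum.cong[OF refl], auto simp: c_def power_divide)
    also have "\<dots> = real k * (1/N^2) + (if k < d then t^2/N^2 else 0)" by (rule sum_step[OF kd])
    also have "\<dots> = (real k + (if k < d then t^2 else 0)) / N^2" by (simp add: add_divide_distrib)
    also have "\<dots> = 1" using kcase N2 kt by auto
    finally show "(\<Sum>a<d*d. (cmod (\<psi> $ a))^2) = 1" .
  qed
  have adm: "admissible d \<alpha> \<psi>"
    unfolding admissible_def Let_def k_def[symmetric] t_def[symmetric] r_def[symmetric]
  proof (intro conjI allI impI)
    show "unit_vector d \<psi>" by (rule unit)
    fix j assume j: "r + 1 \<le> j \<and> j \<le> d"
    show "schmidt d \<psi> j = 0"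
    proof (cases "t = 0")
      case True
      thus ?thesis using j rk0 sch[of j] unfolding c_def by auto
    next
      case False
      hence "r = k + 1" using rk1 t0 by auto
      thus ?thesis using j sch[of j] unfolding c_def by auto
    qed
  next
    assume tp: "0 < t"
    hence kd': "k < d" using rk1 by auto
    have "schmidt d \<psi> (k+1) = t / N" using sch[of "k+1"] kd' unfolding c_def by simp
    moreover have "(\<Sum>j=1..k. schmidt d \<psi> j) = real k / N"
    proof -
      have "(\<Sum>j=1..k. schmidt d \<psi> j) = (\<Sum>j=1..k. c (j - 1))" by (rule sum.cong[OF refl], rule sch, insert kd, auto)
      also have "\<dots> = (\<Sum>i<k. c i)" by (rule sum_shift1)
      also have "\<dots> = real k / N" unfolding c_def by simp
      finally show ?thesis .
    qed
    ultimately show "schmidt d \<psi> (k+1) \<le> t / real k * (\<Sum>j=1..k. schmidt d \<psi> j)" using k1 by simp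
  qed
  have "(\<Sum>i<d. \<psi> $ (i*d+i)) = complex_of_real (\<Sum>i<d. if i < k then 1/N else if i = k then t/N else 0)"
    by (simp add: psi_idx c_def)
  also have "(\<Sum>i<d. if i < k then 1/N else if i = k then t/N else 0) = real k * (1/N) + (if k < d then t/N else 0)"
    by (rule sum_step[OF kd])
  also have "\<dots> = (real k + t) / N" using kcase by (auto simp: add_divide_distrib)
  finally have T: "(\<Sum>i<d. \<psi> $ (i*d+i)) = complex_of_real ((real k + t) / N)" .
  have "cmod (\<Sum>i<d. \<psi> $ (i*d+i)) = (real k + t) / N" unfolding T norm_of_real using N0 t0 by simp
  hence "(cmod (\<Sum>i<d. \<psi> $ (i*d+i)))^2 = ((real k + t) / N)^2" by simp
  also have "\<dots> = Mval \<alpha>" unfolding M power_divide N2 ..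
  finally have "Re (qform d (P_omega d) \<psi>) = Mval \<alpha> / real d" unfolding qform_P by simp
  with adm show ?thesis by blast
qed

lemma fd_val: assumes "1 \<le> \<alpha>" "\<alpha> \<le> real d"
  shows "f_d d \<alpha> = Mval \<alpha> / real d"
proof -
  obtain \<psi> where "admissible d \<alpha> \<psi>" "Re (qform d (P_omega d) \<psi>) = Mval \<alpha> / real d" using witness[OF assms] by blast
  hence mem: "Mval \<alpha> / real d \<in> (\<lambda>\<psi>. Re (qform d (P_omega d) \<psi>)) ` V d \<alpha>" unfolding V_def by force
  show ?thesis unfolding f_d_def mu_def
    by (rule cSup_eq_maximum[OF mem], insert adm_bound[OF _ assms], auto simp: V_def)
qed

lemma Mval_pos: assumes "1 \<le> \<alpha>" "\<alpha> \<le> real d" shows "Mval \<alpha> > 0"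
proof -
  note af = alpha_facts[OF assms]
  have "real (nat \<lfloor>\<alpha>\<rfloor>) \<ge> 1" using af(1) by simp
  moreover have "0 \<le> \<alpha> - real (nat \<lfloor>\<alpha>\<rfloor>)" by (rule af(3))
  ultimately show ?thesis unfolding Mval_def by (intro divide_pos_pos) (simp_all add: add_pos_nonneg)
qed

lemma tstar_val: assumes "1 \<le> \<alpha>" "\<alpha> \<le> real d"
  shows "1 / (real d * t_star \<alpha>) = Mval \<alpha> / real d"
proof -
  note af = alpha_facts[OF assms]
  define K where "K = real (nat \<lfloor>\<alpha>\<rfloor>)"
  define T where "T = \<alpha> - K"
  have ts: "t_star \<alpha> = (K + T^2) / (K + T)^2" unfolding t_star_def Let_def af(7) K_def T_def ..
  have M: "Mval \<alpha> = (K + T)^2 / (K + T^2)" unfolding Mval_def K_def T_def ..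
  show ?thesis unfolding ts M by simp
qed

lemma mtrace_unit: "i < d \<Longrightarrow> j < d \<Longrightarrow> mtrace d (matunit d i j) = (if i = j then 1 else 0)"
proof -
  assume ij: "i < d" "j < d"
  have "mtrace d (matunit d i j) = (\<Sum>l<d. if l = i then (if i = j then 1 else 0) else 0)"
    unfolding mtrace_def matunit_def by (rule sum.cong[OF refl], auto)
  thus ?thesis using ij by simp
qed

lemma choi_entry: assumes d: "d > 0" and p: "p < d*d" and q: "q < d*d"
  shows "choi d (Phi_t d t) $$ (p,q) = (if p = q then 1 else 0) - complex_of_real (t * real d) * P_omega d $$ (p,q)"
proof -
  have pd: "p div d < d" "p mod d < d" and qd: "q div d < d" "q mod d < d"
    using p q d by (auto simp: less_mult_imp_div_less)
  have eq: "(p div d = q div d \<and> p mod d = q mod d) \<longleftrightarrow> p = q" by (metis div_mult_mod_eq)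
  have c: "choi d (Phi_t d t) $$ (p,q) = (if p div d = q div d then 1 else 0) * (if p mod d = q mod d then 1 else 0)
     - complex_of_real t * (if p mod d = p div d \<and> q mod d = q div d then 1 else 0)"
    unfolding choi_def Phi_t_def using p q pd qd by (simp add: mtrace_unit, simp add: matunit_def)
  have sd: "complex_of_real (1 / sqrt (real d)) * complex_of_real (1 / sqrt (real d)) = 1 / complex_of_real (real d)"
    using d by (simp flip: of_real_mult)
  have P: "P_omega d $$ (p,q) = (if p div d = p mod d \<and> q div d = q mod d then 1 / complex_of_real (real d) else 0)"
    unfolding P_omega_def using p q sd by (simp add: omega_idx)
  show ?thesis unfolding c P using eq d by auto
qed

lemma qform_choi: assumes d: "d > 0" and u: "unit_vector d \<psi>"
  shows "Re (qform d (choi d (Phi_t d t)) \<psi>) = 1 - t * real d * Re (qform d (P_omega d) \<psi>)"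
proof -
  have n1: "(\<Sum>a<d*d. (cmod (\<psi> $ a))^2) = 1" using u unfolding unit_vector_def by auto
  have "qform d (choi d (Phi_t d t)) \<psi> = (\<Sum>a<d*d. \<Sum>b<d*d. cnj (\<psi> $ a) * (if a = b then 1 else 0) * \<psi> $ b
      - complex_of_real (t * real d) * (cnj (\<psi> $ a) * P_omega d $$ (a,b) * \<psi> $ b))"
    unfolding qform_def by (rule sum.cong[OF refl], rule sum.cong[OF refl], auto simp: choi_entry[OF d] algebra_simps)
  also have "\<dots> = (\<Sum>a<d*d. \<Sum>b<d*d. cnj (\<psi> $ a) * (if a = b then 1 else 0) * \<psi> $ b)
      - complex_of_real (t * real d) * qform d (P_omega d) \<psi>"
    unfolding qform_def by (simp add: sum_subtractf sum_distrib_left)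
  also have "(\<Sum>a<d*d. \<Sum>b<d*d. cnj (\<psi> $ a) * (if a = b then 1 else 0) * \<psi> $ b) = (\<Sum>a<d*d. complex_of_real ((cmod (\<psi> $ a))^2))"
  proof (rule sum.cong[OF refl])
    fix a assume "a \<in> {..<d*d}"
    hence a: "a < d*d" by simp
    have "(\<Sum>b<d*d. cnj (\<psi> $ a) * (if a = b then 1 else 0) * \<psi> $ b) = (\<Sum>b<d*d. if b = a then cnj (\<psi> $ a) * \<psi> $ a else 0)"
      by (rule sum.cong[OF refl], auto)
    also have "\<dots> = cnj (\<psi> $ a) * \<psi> $ a" using a by simp
    also have "\<dots> = complex_of_real ((cmod (\<psi> $ a))^2)" by (simp add: complex_norm_square[symmetric] mult.commute)
    finally show "(\<Sum>b<d*d. cnj (\<psi> $ a) * (if a = b then 1 else 0) * \<psi> $ b) = complex_of_real ((cmod (\<psi> $ a))^2)" .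
  qed
  also have "\<dots> = 1" using arg_cong[OF n1, of complex_of_real] by simp
  finally show ?thesis by simp
qed

lemma herm_pres: "hermitian_preserving d (Phi_t d t)"
  unfolding hermitian_preserving_def
proof (intro ballI impI conjI)
  fix X assume X: "X \<in> carrier_mat d d" and h: "hermitian_mat X"
  show c: "Phi_t d t X \<in> carrier_mat d d" unfolding Phi_t_def using X by (intro minus_carrier_mat smult_carrier_mat)
  have hX: "cnj (X $$ (j,i)) = X $$ (i,j)" if "i < d" "j < d" for i j
    using arg_cong[OF h[unfolded hermitian_mat_def], of "\<lambda>M. M $$ (i,j)"] that X by simp
  have tr: "cnj (mtrace d X) = mtrace d X" unfolding mtrace_def by (simp add: hX)
  show "hermitian_mat (Phi_t d t X)" unfolding hermitian_mat_def
    by (rule eq_matI, insert X c hX tr, auto simp: Phi_t_def)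
qed

theorem corollary4p8:
  fixes d :: nat
  assumes "d \<ge> 2"
  shows "(\<forall>\<alpha>\<in>{1..real d}. f_d d \<alpha> = 1 / (real d * t_star \<alpha>)) \<and>
         (\<forall>\<alpha>\<in>{1..real d}. \<forall>t\<in>{0<..1}.
            Phi_t d t \<in> P_class d \<alpha> \<longleftrightarrow> t \<le> 1 / (real d * f_d d \<alpha>))"
proof (intro conjI ballI)
  have d0: "d > 0" using assms by simp
  fix \<alpha> assume "\<alpha> \<in> {1..real d}"
  hence a1: "1 \<le> \<alpha>" and ad: "\<alpha> \<le> real d" by auto
  show "f_d d \<alpha> = 1 / (real d * t_star \<alpha>)" using fd_val[OF a1 ad] tstar_val[OF a1 ad] by simp
  fix t assume "t \<in> {0<..(1::real)}"
  hence t0: "0 < t" by simp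
  have M: "Mval \<alpha> > 0" by (rule Mval_pos[OF a1 ad])
  have fd: "1 / (real d * f_d d \<alpha>) = 1 / Mval \<alpha>" unfolding fd_val[OF a1 ad] using d0 by simp
  have iff: "Phi_t d t \<in> P_class d \<alpha> \<longleftrightarrow> (\<forall>\<psi>\<in>V d \<alpha>. 0 \<le> 1 - t * real d * Re (qform d (P_omega d) \<psi>))"
    unfolding P_class_def using herm_pres qform_choi[OF d0] by (auto simp: V_def admissible_def Let_def)
  show "Phi_t d t \<in> P_class d \<alpha> \<longleftrightarrow> t \<le> 1 / (real d * f_d d \<alpha>)"
    unfolding iff fd
  proof
    assume all: "\<forall>\<psi>\<in>V d \<alpha>. 0 \<le> 1 - t * real d * Re (qform d (P_omega d) \<psi>)"
    obtain \<psi> where adm: "admissible d \<alpha> \<psi>" and q: "Re (qform d (P_omega d) \<psi>) = Mval \<alpha> / real d"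
      using witness[OF a1 ad] by blast
    have "0 \<le> 1 - t * real d * (Mval \<alpha> / real d)" using all adm q unfolding V_def by force
    hence "t * Mval \<alpha> \<le> 1" using d0 by simp
    thus "t \<le> 1 / Mval \<alpha>" using M by (simp add: field_simps)
  next
    assume "t \<le> 1 / Mval \<alpha>"
    hence tM: "t * Mval \<alpha> \<le> 1" using M by (simp add: field_simps)
    show "\<forall>\<psi>\<in>V d \<alpha>. 0 \<le> 1 - t * real d * Re (qform d (P_omega d) \<psi>)"
    proof
      fix \<psi> assume "\<psi> \<in> V d \<alpha>"
      hence "Re (qform d (P_omega d) \<psi>) \<le> Mval \<alpha> / real d" using adm_bound[OF _ a1 ad] unfolding V_def by auto
      hence "t * real d * Re (qform d (P_omega d) \<psi>) \<le> t * real d * (Mval \<alpha> / real d)"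
        using t0 d0 by (intro mult_left_mono) auto
      also have "\<dots> = t * Mval \<alpha>" using d0 by simp
      finally show "0 \<le> 1 - t * real d * Re (qform d (P_omega d) \<psi>)" using tM by simp
    qed
  qed
qed


end
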